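(* Let $I_i=[t_i,t_{i+1}]$ with $t_i<t_{i+1}$, let $p\in\mathbb{N}$, and let $\phi_L,\phi,\phi_R:I_i\to\mathbb{R}$ be polynomials of degree at most $p$. Let $m\in\mathbb{N}\cdot p$ (a positive integer multiple of $p$). If $\phi_L(t)\le\phi(t)\le\phi_R(t)$ for all $t\in\mathcal{T}_{i,m}$ and $\sup_{t\in I_i}\{\phi_R(t)-\phi_L(t)\}\le C_{box}$, then for all $t\in I_i$, \[ \phi(t)\ge\phi_L(t)-\frac{\pi^2C_{box}}{8}\sqrt{p}\Big(\frac pm\Big)^2,\qquad \phi(t)\le\phi_R(t)+\frac{\pi^2C_{box}}{8}\sqrt{p}\Big(\frac pm\Big)^2. \]
   Context: $\mathcal{T}_{i,m}$ is the set of Chebyshev–Gauss–Lobatto points of degree $m$ on $I_i$: the images of $\tau_k=-\cos(k\pi/m)$, $k=0,\dots,m$, under the increasing affine map $[-1,1]\to I_i$. $C_{box}$ is a positive constant. *)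

theory Defs
  imports "HOL-Analysis.Analysis" "HOL-Computational_Algebra.Polynomial"
begin

definition cgl_points :: "real \<Rightarrow> real \<Rightarrow> nat \<Rightarrow> real set" where
  "cgl_points a b m =
     {(a + b) / 2 + (b - a) / 2 * (- cos (real k * pi / real m)) | k. k \<le> m}"

end

theory Submission
  imports Defs
begin


lemma cos_interp_lower:
  fixes a :: "nat \<Rightarrow> real" and p :: nat
  assumes "u \<le> y0" "y0 \<le> v"
    and "(\<Sum>k\<le>p. a k * cos (real k * u)) \<ge> 0" "(\<Sum>k\<le>p. a k * cos (real k * v)) \<ge> 0"
  shows "(\<Sum>k\<le>p. a k * cos (real k * y0)) \<ge> - (\<Sum>k\<le>p. (real k)^2 * \<bar>a k\<bar>) * (v-u)^2/8"
proof -
  define g where "g = (\<lambda>x. \<Sum>k\<le>p. a k * cos (real k * x))"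
  define M where "M = (\<Sum>k\<le>p. (real k)^2 * \<bar>a k\<bar>)"
  have M0: "M \<ge> 0" unfolding M_def by (intro sum_nonneg) auto
  define f where "f = (\<lambda>x. - g x + M/2 * x^2)"
  define f' where "f' = (\<lambda>x. (\<Sum>k\<le>p. a k * real k * sin (real k * x)) + M * x)"
  define f'' where "f'' = (\<lambda>x. (\<Sum>k\<le>p. a k * (real k)^2 * cos (real k * x)) + M)"
  have df: "(f has_real_derivative f' x) (at x)" for x
    unfolding f_def f'_def g_def
    by (auto intro!: derivative_eq_intros simp: sum_negf[symmetric] algebra_simps)
  have df': "(f' has_real_derivative f'' x) (at x)" for x
    unfolding f''_def f'_def
    by (auto intro!: derivative_eq_intros simp: power2_eq_square algebra_simps)
  have f''0: "f'' x \<ge> 0" for x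
  proof -
    have "(\<Sum>k\<le>p. a k * (real k)^2 * cos (real k * x)) \<ge> - M"
    proof -
      have "(\<Sum>k\<le>p. - ((real k)^2 * \<bar>a k\<bar>)) \<le> (\<Sum>k\<le>p. a k * (real k)^2 * cos (real k * x))"
      proof (rule sum_mono)
        fix k
        have "\<bar>a k * (real k)^2 * cos (real k * x)\<bar> \<le> \<bar>a k\<bar> * (real k)^2 * 1"
          unfolding abs_mult by (simp only: abs_power2 abs_of_nat) (intro mult_left_mono, auto)
        then show "- ((real k)^2 * \<bar>a k\<bar>) \<le> a k * (real k)^2 * cos (real k * x)"
          by (simp add: abs_le_iff algebra_simps)
      qed
      then show ?thesis unfolding M_def by (simp add: sum_negf)
    qed
    then show ?thesis unfolding f''_def by simp
  qed
  have mono: "f' x \<le> f' y" if "x \<le> y" for x y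
    using that by (intro DERIV_nonneg_imp_nondecreasing[of x y f']) (use df' f''0 in blast)+
  have cvx: "convex_on UNIV f"
    by (rule convex_on_realI[of UNIV f f']) (use df mono in auto)
  show ?thesis
  proof (cases "u = v")
    case True
    then have "y0 = u" using assms by simp
    then show ?thesis using assms(3) True by simp
  next
    case False
    then have uv: "u < v" using assms by simp
    define t where "t = (y0 - u) / (v - u)"
    have t0: "t \<ge> 0" "t \<le> 1" using assms uv by (auto simp: t_def field_simps)
    have "t * (v - u) = y0 - u" using uv by (simp add: t_def)
    then have y0: "y0 = (1 - t) * u + t * v" by (simp add: algebra_simps)
    have "f ((1 - t) *\<^sub>R u + t *\<^sub>R v) \<le> (1 - t) * f u + t * f v"
      using convex_onD[OF cvx] t0 by blast
    then have "f y0 \<le> (1 - t) * f u + t * f v" using y0 by simp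
    then have ineq: "g y0 \<ge> (1-t) * g u + t * g v - M/2 * ((1-t)*u^2 + t* v^2 - y0^2)"
      unfolding f_def by (simp add: algebra_simps diff_divide_distrib)
    have e: "(1-t)*u^2 + t* v^2 - y0^2 = t*(1-t)*(v-u)^2"
      unfolding y0 by (simp add: power2_eq_square algebra_simps)
    have q: "t*(1-t) \<le> 1/4"
    proof -
      have "0 \<le> (t - 1/2)^2" by simp
      then show ?thesis by (simp add: power2_eq_square algebra_simps)
    qed
    have "M/2 * (t*(1-t)*(v-u)^2) \<le> M/2 * (1/4*(v-u)^2)"
      using M0 q by (intro mult_left_mono mult_right_mono) auto
    moreover have "(1-t) * g u + t * g v \<ge> 0"
      using assms(3,4) t0 unfolding g_def by simp
    ultimately have "g y0 \<ge> - M * (v-u)^2/8" using ineq unfolding e by linarith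
    then show ?thesis unfolding g_def M_def by simp
  qed
qed



definition wt :: "nat \<Rightarrow> nat \<Rightarrow> real" where
  "wt m i = (if i = 0 \<or> i = m then 1/2 else 1)"

lemma wsum_split:
  assumes "0 < m"
  shows "(\<Sum>i\<le>m. wt m i * c i) = (\<Sum>i\<le>m. c i) - c 0 / 2 - c m / 2"
proof -
  have "wt m i * c i = c i - (if i = 0 then c 0 / 2 else 0) - (if i = m then c m / 2 else 0)" for i
    using assms by (auto simp: wt_def)
  then have "(\<Sum>i\<le>m. wt m i * c i) = (\<Sum>i\<le>m. c i - (if i = 0 then c 0 / 2 else 0) - (if i = m then c m / 2 else 0))"
    by simp
  also have "\<dots> = (\<Sum>i\<le>m. c i) - c 0 / 2 - c m / 2"
    by (simp add: sum_subtractf)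
  finally show ?thesis .
qed

lemma wt_sum: "0 < m \<Longrightarrow> (\<Sum>i\<le>m. wt m i) = real m"
  using wsum_split[of m "\<lambda>_. 1"] by simp

lemma trap_cos_zero:
  fixes m n :: nat
  assumes "0 < n" "n < 2*m"
  shows "(\<Sum>i\<le>m. wt m i * cos (real n * (real i * pi / real m))) = 0"
proof -
  have m0: "0 < m" using assms by simp
  define ph where "ph = real n * pi / real m"
  have eq: "cos (real n * (real i * pi / real m)) = cos (real i * ph)" for i
    by (simp add: ph_def mult.left_commute)
  define s where "s = sin (ph/2)"
  have "ph/2 > 0" using assms m0 by (simp add: ph_def)
  moreover have "ph/2 < pi"
  proof -
    have "real n < 2 * real m" using assms by linarith
    then have "real n * pi < 2 * real m * pi" by simp
    then show ?thesis using m0 by (simp add: ph_def field_simps)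
  qed
  ultimately have s0: "s > 0" unfolding s_def by (intro sin_gt_zero)
  define f where "f = (\<lambda>i::nat. sin ((real i - 1/2) * ph))"
  have step: "f (Suc i) - f i = 2 * s * cos (real i * ph)" for i
  proof -
    have "f (Suc i) = sin (real i * ph + ph/2)" by (simp add: f_def algebra_simps)
    moreover have "f i = sin (real i * ph - ph/2)" by (simp add: f_def algebra_simps)
    ultimately show ?thesis by (simp add: sin_add sin_diff s_def)
  qed
  have "(\<Sum>i\<le>m. 2 * s * cos (real i * ph)) = (\<Sum>i<Suc m. f (Suc i) - f i)"
    by (simp add: step lessThan_Suc_atMost)
  also have "\<dots> = f (Suc m) - f 0" by (rule sum_lessThan_telescope)
  finally have tel: "(\<Sum>i\<le>m. 2 * s * cos (real i * ph)) = f (Suc m) - f 0" .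
  have mph: "real m * ph = real n * pi" using m0 by (simp add: ph_def)
  have fS: "f (Suc m) = (-1)^n * s"
  proof -
    have "f (Suc m) = sin (real n * pi + ph/2)"
      using mph by (simp add: f_def algebra_simps)
    then show ?thesis by (simp add: sin_add sin_npi cos_npi s_def)
  qed
  have f0: "f 0 = - s" by (simp add: f_def s_def)
  have cm: "cos (real m * ph) = (-1)^n" using mph by (simp add: cos_npi)
  have "2 * s * (\<Sum>i\<le>m. wt m i * cos (real i * ph))
      = (\<Sum>i\<le>m. wt m i * (2 * s * cos (real i * ph)))"
    by (simp add: sum_distrib_left algebra_simps)
  also have "\<dots> = (\<Sum>i\<le>m. 2 * s * cos (real i * ph)) - 2 * s / 2 - 2 * s * (-1)^n / 2"
    using wsum_split[OF m0, of "\<lambda>i. 2 * s * cos (real i * ph)"] cm by simp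
  also have "\<dots> = 0" using tel fS f0 by simp
  finally have "(\<Sum>i\<le>m. wt m i * cos (real i * ph)) = 0" using s0 by simp
  then show ?thesis by (simp only: eq)
qed


lemma trap_cos_nonneg:
  fixes m n :: nat
  assumes "0 < m" "n \<le> 2*m"
  shows "(\<Sum>i\<le>m. wt m i * cos (real n * (real i * pi / real m))) \<ge> 0"
proof -
  consider "n = 0" | "0 < n \<and> n < 2*m" | "n = 2*m" using assms by linarith
  then show ?thesis
  proof cases
    case 1
    then show ?thesis by (simp add: wt_def sum_nonneg)
  next
    case 2
    then show ?thesis using trap_cos_zero[of n m] by simp
  next
    case 3
    have "cos (real n * (real i * pi / real m)) = 1" for i
    proof -
      have "real n * (real i * pi / real m) = real (2*i) * pi" using 3 assms by simp
      then show ?thesis by (simp only: cos_npi) simp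
    qed
    then show ?thesis by (simp add: wt_def sum_nonneg)
  qed
qed

lemma orth_off:
  fixes m j k :: nat
  assumes "0 < m" "j \<le> m" "k \<le> m" "j \<noteq> k"
  shows "(\<Sum>i\<le>m. wt m i * (cos (real j * (real i * pi / real m)) * cos (real k * (real i * pi / real m)))) = 0"
proof -
  define d where "d = (if k \<le> j then j - k else k - j)"
  have d: "0 < d" "d < 2*m" using assms by (auto simp: d_def)
  have s: "0 < j + k" "j + k < 2*m" using assms by auto
  have e: "cos (real j * x) * cos (real k * x) = (cos (real d * x) + cos (real (j+k) * x)) / 2" for x
  proof -
    have "cos (real j * x - real k * x) = cos (real d * x)"
    proof (cases "k \<le> j")
      case True
      then show ?thesis by (simp add: d_def of_nat_diff algebra_simps)
    next
      case False
      then have "real j * x - real k * x = - (real d * x)" by (simp add: d_def of_nat_diff algebra_simps)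
      then show ?thesis by simp
    qed
    then show ?thesis by (simp add: cos_times_cos algebra_simps)
  qed
  have "(\<Sum>i\<le>m. wt m i * (cos (real j * (real i * pi / real m)) * cos (real k * (real i * pi / real m))))
     = (\<Sum>i\<le>m. wt m i * cos (real d * (real i * pi / real m))) / 2
       + (\<Sum>i\<le>m. wt m i * cos (real (j+k) * (real i * pi / real m))) / 2"
    unfolding e by (simp add: sum_divide_distrib sum.distrib algebra_simps add_divide_distrib)
  also have "\<dots> = 0" using trap_cos_zero[OF d] trap_cos_zero[OF s] by simp
  finally show ?thesis .
qed

lemma orth_diag:
  fixes m k :: nat
  assumes "0 < m" "k \<le> m"
  shows "(\<Sum>i\<le>m. wt m i * (cos (real k * (real i * pi / real m)) * cos (real k * (real i * pi / real m)))) \<ge> real m / 2"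
proof -
  have e: "cos (real k * x) * cos (real k * x) = (1 + cos (real (k+k) * x)) / 2" for x
    by (simp add: cos_times_cos algebra_simps)
  have "(\<Sum>i\<le>m. wt m i * (cos (real k * (real i * pi / real m)) * cos (real k * (real i * pi / real m))))
     = (\<Sum>i\<le>m. wt m i) / 2
       + (\<Sum>i\<le>m. wt m i * cos (real (k+k) * (real i * pi / real m))) / 2"
    unfolding e by (simp add: sum_divide_distrib sum.distrib algebra_simps add_divide_distrib)
  moreover have "(\<Sum>i\<le>m. wt m i * cos (real (k+k) * (real i * pi / real m))) \<ge> 0"
    using assms by (intro trap_cos_nonneg) auto
  ultimately show ?thesis using wt_sum[OF assms(1)] by simp
qed


lemma coeff_bound:
  fixes a :: "nat \<Rightarrow> real" and m p :: nat
  assumes m0: "0 < m" and pm: "p \<le> m"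
    and bd: "\<And>i. i \<le> m \<Longrightarrow> \<bar>(\<Sum>k\<le>p. a k * cos (real k * (real i * pi / real m)))\<bar> \<le> D"
  shows "(\<Sum>k\<in>{1..p}. (a k)^2) \<le> 2 * D^2"
proof -
  define c where "c = (\<lambda>k i. cos (real k * (real i * pi / real m)))"
  define S where "S = (\<lambda>j k. \<Sum>i\<le>m. wt m i * (c j i * c k i))"
  define g where "g = (\<lambda>i. \<Sum>k\<le>p. a k * c k i)"
  define G where "G = (\<Sum>i\<le>m. wt m i * (g i * g i))"
  have wt0: "wt m i \<ge> 0" for i by (simp add: wt_def)
  have "G \<le> (\<Sum>i\<le>m. wt m i * D^2)"
    unfolding G_def
  proof (rule sum_mono)
    fix i assume "i \<in> {..m}"
    then have "\<bar>g i\<bar> \<le> D" using bd unfolding g_def c_def by simp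
    then have "(\<bar>g i\<bar>)^2 \<le> D^2" by (intro power_mono) auto
    then have "g i * g i \<le> D^2" by (simp add: power2_eq_square)
    then show "wt m i * (g i * g i) \<le> wt m i * D^2" using wt0 by (intro mult_left_mono) auto
  qed
  also have "\<dots> = real m * D^2" using wt_sum[OF m0] by (simp add: sum_distrib_right[symmetric])
  finally have Gup: "G \<le> real m * D^2" .
  have "G = (\<Sum>i\<le>m. \<Sum>j\<le>p. \<Sum>k\<le>p. wt m i * (a j * a k * (c j i * c k i)))"
    unfolding G_def g_def by (simp add: sum_product sum_distrib_left algebra_simps)
  also have "\<dots> = (\<Sum>j\<le>p. \<Sum>k\<le>p. \<Sum>i\<le>m. wt m i * (a j * a k * (c j i * c k i)))"
    by (simp add: sum.swap[of _ "{..m}"])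
  also have "\<dots> = (\<Sum>j\<le>p. \<Sum>k\<le>p. a j * a k * S j k)"
    unfolding S_def by (simp add: sum_distrib_left algebra_simps)
  also have "\<dots> = (\<Sum>j\<le>p. a j * a j * S j j)"
  proof (rule sum.cong[OF refl])
    fix j assume j: "j \<in> {..p}"
    have "(\<Sum>k\<le>p. a j * a k * S j k) = (\<Sum>k\<le>p. if k = j then a j * a j * S j j else 0)"
    proof (rule sum.cong[OF refl])
      fix k assume k: "k \<in> {..p}"
      show "a j * a k * S j k = (if k = j then a j * a j * S j j else 0)"
      proof (cases "k = j")
        case False
        then have "S j k = 0" unfolding S_def c_def using orth_off[of m j k] m0 pm j k by auto
        then show ?thesis using False by simp
      qed simp
    qed
    also have "\<dots> = a j * a j * S j j" using j by simp
    finally show "(\<Sum>k\<le>p. a j * a k * S j k) = a j * a j * S j j" .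
  qed
  finally have Geq: "G = (\<Sum>j\<le>p. a j * a j * S j j)" .
  have "(\<Sum>j\<in>{1..p}. (a j)^2 * (real m / 2)) \<le> (\<Sum>j\<le>p. (a j)^2 * (real m / 2))"
    by (rule sum_mono2) auto
  also have "\<dots> \<le> (\<Sum>j\<le>p. a j * a j * S j j)"
  proof (rule sum_mono)
    fix j assume "j \<in> {..p}"
    then have "S j j \<ge> real m / 2" unfolding S_def c_def using orth_diag[of m j] m0 pm by auto
    then show "(a j)^2 * (real m / 2) \<le> a j * a j * S j j"
      using mult_left_mono[of "real m / 2" "S j j" "a j * a j"]
      by (simp add: power2_eq_square)
  qed
  finally have "(\<Sum>j\<in>{1..p}. (a j)^2 * (real m / 2)) \<le> real m * D^2"
    using Geq Gup by linarith
  then have "(\<Sum>j\<in>{1..p}. (a j)^2) * (real m / 2) \<le> real m * D^2"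
    by (simp only: sum_distrib_right)
  then show ?thesis using m0 by (simp add: field_simps)
qed



definition cpoly :: "nat \<Rightarrow> (real \<Rightarrow> real) \<Rightarrow> bool" where
  "cpoly n f \<longleftrightarrow> (\<exists>a. \<forall>x. f x = (\<Sum>k\<le>n. a k * cos (real k * x)))"

lemma cpoly_mono:
  assumes "cpoly n f" "n \<le> n'" shows "cpoly n' f"
proof -
  obtain a where a: "\<And>x. f x = (\<Sum>k\<le>n. a k * cos (real k * x))" using assms(1) unfolding cpoly_def by blast
  define b where "b = (\<lambda>k. if k \<le> n then a k else 0)"
  have "f x = (\<Sum>k\<le>n'. b k * cos (real k * x))" for x
  proof -
    have "(\<Sum>k\<le>n'. b k * cos (real k * x)) = (\<Sum>k\<le>n. b k * cos (real k * x))"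
      by (rule sum.mono_neutral_right) (use assms(2) in \<open>auto simp: b_def\<close>)
    then show ?thesis using a by (simp add: b_def)
  qed
  then show ?thesis unfolding cpoly_def by blast
qed

lemma cpoly_single: "k \<le> n \<Longrightarrow> cpoly n (\<lambda>x. c * cos (real k * x))"
  unfolding cpoly_def
proof (intro exI allI)
  fix x assume k: "k \<le> n"
  have "(\<Sum>j\<le>n. (if j = k then c else 0) * cos (real j * x)) = (\<Sum>j\<le>n. if j = k then c * cos (real k * x) else 0)"
    by (rule sum.cong) auto
  also have "\<dots> = c * cos (real k * x)" using k by simp
  finally show "c * cos (real k * x) = (\<Sum>j\<le>n. (if j = k then c else 0) * cos (real j * x))" by simp
qed

lemma cpoly_add: "cpoly n f \<Longrightarrow> cpoly n g \<Longrightarrow> cpoly n (\<lambda>x. f x + g x)"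
  unfolding cpoly_def
proof (elim exE)
  fix a b assume a: "\<forall>x. f x = (\<Sum>k\<le>n. a k * cos (real k * x))"
    and b: "\<forall>x. g x = (\<Sum>k\<le>n. b k * cos (real k * x))"
  show "\<exists>c. \<forall>x. f x + g x = (\<Sum>k\<le>n. c k * cos (real k * x))"
    by (rule exI[of _ "\<lambda>k. a k + b k"]) (simp add: a b sum.distrib algebra_simps)
qed

lemma cpoly_zero: "cpoly n (\<lambda>x. 0)"
  unfolding cpoly_def by (rule exI[of _ "\<lambda>_. 0"]) simp

lemma cpoly_sum: "finite A \<Longrightarrow> (\<And>j. j \<in> A \<Longrightarrow> cpoly n (f j)) \<Longrightarrow> cpoly n (\<lambda>x. \<Sum>j\<in>A. f j x)"
proof (induction A rule: finite_induct)
  case empty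
  then show ?case using cpoly_zero by simp
next
  case (insert a A)
  then show ?case using cpoly_add[of n "f a" "\<lambda>x. \<Sum>j\<in>A. f j x"] by simp
qed

lemma cpoly_cos_mult:
  assumes "cpoly n f" shows "cpoly (Suc n) (\<lambda>x. cos x * f x)"
proof -
  obtain a where a: "\<And>x. f x = (\<Sum>k\<le>n. a k * cos (real k * x))" using assms unfolding cpoly_def by blast
  have e: "cos x * f x = (\<Sum>k\<le>n. (a k / 2 * cos (real (Suc k) * x) + a k / 2 * cos (real (if k = 0 then 1 else k - 1) * x)))" for x
  proof -
    have "cos x * (a k * cos (real k * x)) = a k / 2 * cos (real (Suc k) * x) + a k / 2 * cos (real (if k = 0 then 1 else k - 1) * x)" for k
    proof (cases k)
      case 0
      then show ?thesis by (simp add: field_simps)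
    next
      case (Suc j)
      have "cos x * cos (real k * x) = cos (real k * x) * cos x" by simp
      also have "\<dots> = (cos (real k * x - x) + cos (real k * x + x)) / 2"
        by (rule cos_times_cos)
      finally have "cos x * cos (real k * x) = (cos (real k * x - x) + cos (real k * x + x)) / 2" .
      moreover have h2: "real k * x - x = real (if k = 0 then 1 else k - 1) * x" using Suc by (simp add: algebra_simps)
      moreover have h3: "real k * x + x = real (Suc k) * x" by (simp add: algebra_simps)
      ultimately have h: "cos x * cos (real k * x) = (cos (real (if k = 0 then 1 else k - 1) * x) + cos (real (Suc k) * x)) / 2"
        by (simp only:)
      define A where "A = cos (real (Suc k) * x)"
      define B where "B = cos (real (if k = 0 then 1 else k - 1) * x)"
      have "cos x * (a k * cos (real k * x)) = a k * (cos x * cos (real k * x))" by (simp only: ac_simps)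
      also have "\<dots> = a k * ((B + A) / 2)" unfolding h A_def B_def ..
      also have "\<dots> = a k / 2 * A + a k / 2 * B" by (simp add: field_simps)
      finally show ?thesis unfolding A_def B_def .
    qed
    then show ?thesis unfolding a by (simp add: sum_distrib_left)
  qed
  have "cpoly (Suc n) (\<lambda>x. \<Sum>k\<le>n. (a k / 2 * cos (real (Suc k) * x) + a k / 2 * cos (real (if k = 0 then 1 else k - 1) * x)))"
    by (intro cpoly_sum cpoly_add cpoly_single) auto
  then show ?thesis unfolding e[symmetric] .
qed

lemma cpoly_poly: "cpoly (degree s) (\<lambda>x. poly s (cos x))"
proof (induction s)
  case 0
  then show ?case using cpoly_zero by simp
next
  case (pCons c s)
  have c: "cpoly 0 (\<lambda>x. c * cos (real 0 * x))" by (rule cpoly_single) simp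
  show ?case
  proof (cases "s = 0")
    case True
    then show ?thesis using c by simp
  next
    case False
    have "cpoly (Suc (degree s)) (\<lambda>x. c * cos (real 0 * x) + cos x * poly s (cos x))"
      by (intro cpoly_add cpoly_cos_mult pCons.IH cpoly_mono[OF c]) auto
    then show ?thesis using False by simp
  qed
qed



lemma trig_main:
  fixes a :: "nat \<Rightarrow> real" and m p :: nat and C y0 :: real
  assumes m0: "0 < m" and p1: "1 \<le> p" and pm: "p \<le> m" and C0: "0 \<le> C"
    and node: "\<And>i. i \<le> m \<Longrightarrow> 0 \<le> (\<Sum>k\<le>p. a k * cos (real k * (real i * pi / real m)))
                     \<and> (\<Sum>k\<le>p. a k * cos (real k * (real i * pi / real m))) \<le> C"
    and y0: "0 \<le> y0" "y0 \<le> pi"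
  shows "(\<Sum>k\<le>p. a k * cos (real k * y0)) \<ge> - (pi^2 * C / 8 * sqrt (real p) * (real p / real m)^2)"
proof -
  define a' where "a' = a(0 := a 0 - C/2)"
  have sh: "(\<Sum>k\<le>p. a' k * cos (real k * x)) = (\<Sum>k\<le>p. a k * cos (real k * x)) - C/2" for x
  proof -
    have "(\<Sum>k\<le>p. a' k * cos (real k * x)) = (\<Sum>k\<le>p. a k * cos (real k * x) - (if k = 0 then C/2 else 0))"
      by (rule sum.cong) (auto simp: a'_def)
    also have "\<dots> = (\<Sum>k\<le>p. a k * cos (real k * x)) - C/2"
      by (simp add: sum_subtractf)
    finally show ?thesis .
  qed
  have "(\<Sum>k\<in>{1..p}. (a' k)^2) \<le> 2 * (C/2)^2"
  proof (rule coeff_bound[OF m0 pm])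
    fix i assume "i \<le> m"
    then show "\<bar>\<Sum>k\<le>p. a' k * cos (real k * (real i * pi / real m))\<bar> \<le> C / 2"
      using node[of i] unfolding sh abs_le_iff by linarith
  qed
  moreover have "(\<Sum>k\<in>{1..p}. (a' k)^2) = (\<Sum>k\<in>{1..p}. (a k)^2)"
    by (rule sum.cong) (auto simp: a'_def)
  ultimately have asq: "(\<Sum>k\<in>{1..p}. (\<bar>a k\<bar>)^2) \<le> C^2 / 2" by (simp add: power2_eq_square)
  define M where "M = (\<Sum>k\<le>p. (real k)^2 * \<bar>a k\<bar>)"
  have M0: "M \<ge> 0" unfolding M_def by (intro sum_nonneg) auto
  have "{..p} = insert 0 {1..p}" by auto
  then have M1: "M = (\<Sum>k\<in>{1..p}. (real k)^2 * \<bar>a k\<bar>)" unfolding M_def by simp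
  have "M^2 \<le> (\<Sum>k\<in>{1..p}. ((real k)^2)^2) * (\<Sum>k\<in>{1..p}. (\<bar>a k\<bar>)^2)"
    unfolding M1 by (rule Cauchy_Schwarz_ineq_sum)
  also have "\<dots> \<le> (\<Sum>k\<in>{1..p}. (real p)^4) * (C^2 / 2)"
  proof (rule mult_mono)
    show "(\<Sum>k\<in>{1..p}. ((real k)^2)^2) \<le> (\<Sum>k\<in>{1..p}. (real p)^4)"
    proof (rule sum_mono)
      fix k assume "k \<in> {1..p}"
      then have "real k \<le> real p" by simp
      then have "(real k)^4 \<le> (real p)^4" by (intro power_mono) auto
      then show "((real k)^2)^2 \<le> (real p)^4" by (simp add: power_mult[symmetric])
    qed
  qed (use asq in \<open>auto intro: sum_nonneg\<close>)
  also have "\<dots> = (real p)^5 * C^2 / 2" by (simp add: eval_nat_numeral)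
  also have "\<dots> \<le> ((real p)^2 * sqrt (real p) * C)^2"
  proof -
    have "((real p)^2 * sqrt (real p) * C)^2 = (real p)^4 * (sqrt (real p))^2 * C^2"
      by (simp add: power_mult_distrib power_mult[symmetric])
    also have "\<dots> = (real p)^5 * C^2" by (simp add: eval_nat_numeral)
    finally show ?thesis by (simp add: C0)
  qed
  finally have "M \<le> (real p)^2 * sqrt (real p) * C"
    by (rule power2_le_imp_le) (use C0 in simp)
  note Mle = this
  define r where "r = y0 * real m / pi"
  have r0: "0 \<le> r" "r \<le> real m" using y0 m0 by (auto simp: r_def field_simps)
  define i where "i = min (nat \<lfloor>r\<rfloor>) (m - 1)"
  have im: "i < m" "Suc i \<le> m" using m0 by (auto simp: i_def)
  have ir: "real i \<le> r" using r0 by (auto simp: i_def) linarith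
  have ir2: "r \<le> real (Suc i)"
  proof (cases "nat \<lfloor>r\<rfloor> \<le> m - 1")
    case True
    then have "i = nat \<lfloor>r\<rfloor>" by (simp add: i_def)
    then show ?thesis using r0 by simp linarith
  next
    case False
    then have "i = m - 1" by (simp add: i_def)
    then show ?thesis using r0 m0 by (simp add: of_nat_diff)
  qed
  define u where "u = real i * pi / real m"
  define v where "v = real (Suc i) * pi / real m"
  have uy: "u \<le> y0"
  proof -
    have "real i * pi \<le> r * pi" using ir by (intro mult_right_mono) auto
    then show ?thesis using m0 by (simp add: u_def r_def field_simps)
  qed
  have yv: "y0 \<le> v"
  proof -
    have "r * pi \<le> real (Suc i) * pi" using ir2 by (intro mult_right_mono) auto
    then show ?thesis using m0 by (simp add: v_def r_def field_simps)
  qed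
  have vu: "v - u = pi / real m" by (simp add: u_def v_def add_divide_distrib algebra_simps)
  have "(\<Sum>k\<le>p. a k * cos (real k * y0)) \<ge> - M * (v-u)^2/8"
    unfolding M_def
    by (rule cos_interp_lower[OF uy yv]) (use node[of i] node[of "Suc i"] im in \<open>auto simp: u_def v_def\<close>)
  moreover have "M * (v-u)^2/8 \<le> (real p)^2 * sqrt (real p) * C * (v-u)^2/8"
    using Mle by (intro divide_right_mono mult_right_mono) auto
  moreover have "(real p)^2 * sqrt (real p) * C * (v-u)^2/8 = pi^2 * C / 8 * sqrt (real p) * (real p / real m)^2"
    unfolding vu by (simp add: power_divide field_simps)
  ultimately show ?thesis by linarith
qed



lemma poly_main:
  fixes q :: "real poly" and ti ti1 C t :: real and p m :: nat
  assumes tt: "ti < ti1" and p1: "1 \<le> p" and pm: "p \<le> m" and C0: "0 \<le> C" and dq: "degree q \<le> p"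
    and node: "\<forall>x\<in>cgl_points ti ti1 m. 0 \<le> poly q x \<and> poly q x \<le> C"
    and t: "t \<in> {ti..ti1}"
  shows "poly q t \<ge> - (pi^2 * C / 8 * sqrt (real p) * (real p / real m)^2)"
proof -
  have m0: "0 < m" using p1 pm by simp
  define mid where "mid = (ti + ti1) / 2"
  define hw where "hw = (ti1 - ti) / 2"
  have hw0: "hw > 0" using tt by (simp add: hw_def)
  define s where "s = pcompose q [:mid, - hw:]"
  have ps: "poly s y = poly q (mid + hw * (- y))" for y by (simp add: s_def poly_pcompose algebra_simps)
  have "degree s = degree q" using hw0 by (simp add: s_def degree_pcompose)
  then have "cpoly p (\<lambda>x. poly s (cos x))" using dq by (intro cpoly_mono[OF cpoly_poly[of s]]) simp
  then obtain a where a: "\<And>x. poly s (cos x) = (\<Sum>k\<le>p. a k * cos (real k * x))"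
    unfolding cpoly_def by blast
  have nd: "0 \<le> (\<Sum>k\<le>p. a k * cos (real k * (real i * pi / real m)))
           \<and> (\<Sum>k\<le>p. a k * cos (real k * (real i * pi / real m))) \<le> C" if "i \<le> m" for i
  proof -
    have mem: "mid + hw * (- cos (real i * pi / real m)) \<in> cgl_points ti ti1 m"
      unfolding cgl_points_def mid_def hw_def using that by (intro CollectI exI[of _ i]) simp
    have e: "poly q (mid + hw * (- cos (real i * pi / real m)))
        = (\<Sum>k\<le>p. a k * cos (real k * (real i * pi / real m)))"
      using ps[of "cos (real i * pi / real m)"] a[of "real i * pi / real m"] by simp
    show ?thesis using bspec[OF node mem] unfolding e .
  qed
  define y0 where "y0 = arccos ((mid - t) / hw)"
  have b: "-1 \<le> (mid - t) / hw" "(mid - t) / hw \<le> 1"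
    using t hw0 by (auto simp: mid_def hw_def field_simps)
  have y0: "0 \<le> y0" "y0 \<le> pi" using arccos_bounded[OF b] by (auto simp: y0_def)
  have cy: "cos y0 = (mid - t) / hw" using cos_arccos[OF b] by (simp add: y0_def)
  have "poly q t = poly s (cos y0)" unfolding ps cy using hw0 by simp
  also have "\<dots> = (\<Sum>k\<le>p. a k * cos (real k * y0))" by (rule a)
  also have "\<dots> \<ge> - (pi^2 * C / 8 * sqrt (real p) * (real p / real m)^2)"
    by (rule trig_main[OF m0 p1 pm C0 nd y0])
  finally show ?thesis .
qed



theorem mainTheorem5:
  fixes ti ti1 C_box :: real and p m :: nat and phiL phi phiR :: "real poly"
  assumes "ti < ti1"
    and "C_box > 0"
    and "p \<ge> 1"
    and "\<exists>k::nat. k \<ge> 1 \<and> m = k * p"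
    and "degree phiL \<le> p" and "degree phi \<le> p" and "degree phiR \<le> p"
    and "\<forall>t \<in> cgl_points ti ti1 m. poly phiL t \<le> poly phi t \<and> poly phi t \<le> poly phiR t"
    and "(SUP t\<in>{ti..ti1}. poly phiR t - poly phiL t) \<le> C_box"
  shows "\<forall>t \<in> {ti..ti1}.
           poly phi t \<ge> poly phiL t - pi\<^sup>2 * C_box / 8 * sqrt (real p) * (real p / real m)\<^sup>2 \<and>
           poly phi t \<le> poly phiR t + pi\<^sup>2 * C_box / 8 * sqrt (real p) * (real p / real m)\<^sup>2"
proof -
  note tt = assms(1)
  have C0: "0 \<le> C_box" using assms(2) by simp
  have p1: "1 \<le> p" using assms(3) .
  obtain k :: nat where k: "k \<ge> 1" "m = k * p" using assms(4) by blast
  have pm: "p \<le> m" using k by simp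
  have bdd: "bdd_above ((\<lambda>t. poly phiR t - poly phiL t) ` {ti..ti1})"
    by (intro bounded_imp_bdd_above compact_imp_bounded compact_continuous_image continuous_intros) auto
  have up: "poly phiR x - poly phiL x \<le> C_box" if "x \<in> {ti..ti1}" for x
    using cSUP_upper[OF that bdd] assms(9) by linarith
  have sub: "x \<in> {ti..ti1}" if xin: "x \<in> cgl_points ti ti1 m" for x
  proof -
    obtain j where x: "x = (ti + ti1) / 2 + (ti1 - ti) / 2 * (- cos (real j * pi / real m))"
      using xin unfolding cgl_points_def by blast
    define c where "c = cos (real j * pi / real m)"
    have c: "-1 \<le> c" "c \<le> 1" by (auto simp: c_def)
    define w where "w = (ti1 - ti) / 2 * c"
    have w1: "w \<le> (ti1 - ti) / 2" unfolding w_def using c tt mult_left_mono[of c 1 "(ti1 - ti) / 2"] by simp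
    have w2: "- ((ti1 - ti) / 2) \<le> w" unfolding w_def using c tt mult_left_mono[of "-1" c "(ti1 - ti) / 2"] by simp
    have xw: "x = (ti + ti1) / 2 - w" unfolding x w_def c_def by simp
    from w1 w2 xw have "ti \<le> x \<and> x \<le> ti1" by (simp add: field_simps)
    then show ?thesis by simp
  qed
  show ?thesis
  proof
    fix t assume t: "t \<in> {ti..ti1}"
    have d1: "degree (phi - phiL) \<le> p" using assms(5,6) degree_diff_le by blast
    have d2: "degree (phiR - phi) \<le> p" using assms(6,7) degree_diff_le by blast
    have n1: "\<forall>x\<in>cgl_points ti ti1 m. 0 \<le> poly (phi - phiL) x \<and> poly (phi - phiL) x \<le> C_box"
      using assms(8) up sub by fastforce
    have n2: "\<forall>x\<in>cgl_points ti ti1 m. 0 \<le> poly (phiR - phi) x \<and> poly (phiR - phi) x \<le> C_box"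
      using assms(8) up sub by fastforce
    show "poly phi t \<ge> poly phiL t - pi\<^sup>2 * C_box / 8 * sqrt (real p) * (real p / real m)\<^sup>2 \<and>
           poly phi t \<le> poly phiR t + pi\<^sup>2 * C_box / 8 * sqrt (real p) * (real p / real m)\<^sup>2"
      using poly_main[OF tt p1 pm C0 d1 n1 t] poly_main[OF tt p1 pm C0 d2 n2 t] by simp
  qed
qed

end
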